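(* Let $\mathbb{X},\mathbb{Y}$ be finite-dimensional real Banach spaces, $T\in\mathbb{L}(\mathbb{X},\mathbb{Y})$, and let $F$ be a face of $B_{\mathbb{X}}$ with $T(F)\neq\{0\}$. Then $T$ preserves TEA pairs contained in $F$ (i.e. $(Tx,Ty)$ is a TEA pair in $\mathbb{Y}$ for all $x,y\in F$) if and only if there exists $u\in F$ such that $J(Tu)\subset J(Tv)$ for all $v\in F\setminus\ker T$.
   Context: A face of $B_{\mathbb{X}}$ is a nonempty convex subset $F\subset S_{\mathbb{X}}$ such that whenever $x_1,x_2\in S_{\mathbb{X}}$, $0<t<1$ and $(1-t)x_1+tx_2\in F$, then $x_1,x_2\in F$. For non-zero $y$, $J(y)=\{g\in S_{\mathbb{Y}^*}: g(y)=\|y\|\}$. $(x,y)$ is a TEA pair if $\|x+y\|=\|x\|+\|y\|$. *)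

theory Defs
  imports "HOL-Analysis.Analysis"
begin

text \<open>Finite-dimensional real normed space (automatically Banach).\<close>
definition fin_dim_space :: "'a::real_normed_vector itself \<Rightarrow> bool" where
  "fin_dim_space _ \<longleftrightarrow> (\<exists>B::'a set. finite B \<and> span B = UNIV)"

definition face_of_ball :: "'a::real_normed_vector set \<Rightarrow> bool" where
  "face_of_ball F \<longleftrightarrow> F \<noteq> {} \<and> convex F \<and> F \<subseteq> sphere 0 1 \<and>
     (\<forall>x1\<in>sphere 0 1. \<forall>x2\<in>sphere 0 1. \<forall>t. 0 < t \<and> t < 1 \<and> (1 - t) *\<^sub>R x1 + t *\<^sub>R x2 \<in> F
        \<longrightarrow> x1 \<in> F \<and> x2 \<in> F)"

definition Jmap :: "'b::real_normed_vector \<Rightarrow> ('b \<Rightarrow> real) set" where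
  "Jmap y = {g. bounded_linear g \<and> onorm g = 1 \<and> g y = norm y}"

definition TEA_pair :: "'a::real_normed_vector \<Rightarrow> 'a \<Rightarrow> bool" where
  "TEA_pair x y \<longleftrightarrow> norm (x + y) = norm x + norm y"

end

theory Submission
  imports Defs
begin

definition pl :: "'b::real_normed_vector set \<Rightarrow> ('b \<Rightarrow> real) \<Rightarrow> bool" where
  "pl W f \<longleftrightarrow> subspace W \<and> (\<forall>x\<in>W. \<forall>y\<in>W. f (x + y) = f x + f y) \<and>
     (\<forall>x\<in>W. \<forall>c. f (c *\<^sub>R x) = c * f x) \<and> (\<forall>x\<in>W. f x \<le> norm x)"

lemma hb_step:
  fixes W :: "'b::real_normed_vector set"
  assumes pl: "pl W f" and zW: "z \<notin> W"
    and c1: "\<forall>x\<in>W. f x - norm (x - z) \<le> c" and c2: "\<forall>y\<in>W. c \<le> norm (y + z) - f y"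
  shows "\<exists>h. pl (span (insert z W)) h \<and> (\<forall>x\<in>W. h x = f x) \<and> h z = c"
proof -
  have sW: "subspace W" and fadd: "\<And>x y. x\<in>W \<Longrightarrow> y\<in>W \<Longrightarrow> f (x + y) = f x + f y"
    and fsc: "\<And>x a. x\<in>W \<Longrightarrow> f (a *\<^sub>R x) = a * f x" and fle: "\<And>x. x\<in>W \<Longrightarrow> f x \<le> norm x"
    using pl unfolding pl_def by auto
  have f0: "f 0 = 0" using fsc[of 0 0] subspace_0[OF sW] by simp
  define \<tau> where "\<tau> x = (THE t. x - t *\<^sub>R z \<in> W)" for x
  have uniq: "\<tau> x = t" if "x - t *\<^sub>R z \<in> W" for x t
    unfolding \<tau>_def
  proof (rule the_equality)
    show "x - t *\<^sub>R z \<in> W" by fact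
    fix s assume s: "x - s *\<^sub>R z \<in> W"
    have "(x - s *\<^sub>R z) - (x - t *\<^sub>R z) \<in> W" using subspace_diff[OF sW s that] .
    hence d: "(t - s) *\<^sub>R z \<in> W" by (simp add: algebra_simps)
    show "s = t"
    proof (rule ccontr)
      assume "s \<noteq> t"
      hence eq: "(1 / (t - s)) *\<^sub>R ((t - s) *\<^sub>R z) = z" by simp
      have mm: "(1 / (t - s)) *\<^sub>R ((t - s) *\<^sub>R z) \<in> W" by (rule subspace_scale[OF sW d])
      show False using zW mm unfolding eq by blast
    qed
  qed
  define h where "h x = f (x - \<tau> x *\<^sub>R z) + \<tau> x * c" for x
  have hk: "h x = f (x - k *\<^sub>R z) + k * c" if "x - k *\<^sub>R z \<in> W" for x k
    using uniq[OF that] unfolding h_def by simp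
  have spW: "span W = W" using sW by simp
  have mem: "\<exists>k. x - k *\<^sub>R z \<in> W" if "x \<in> span (insert z W)" for x
    using that unfolding span_insert spW by auto
  have "pl (span (insert z W)) h"
    unfolding pl_def
  proof (intro conjI ballI allI)
    show "subspace (span (insert z W))" by (rule subspace_span)
  next
    fix x y assume x: "x \<in> span (insert z W)" and y: "y \<in> span (insert z W)"
    obtain k1 where k1: "x - k1 *\<^sub>R z \<in> W" using mem[OF x] by auto
    obtain k2 where k2: "y - k2 *\<^sub>R z \<in> W" using mem[OF y] by auto
    have e: "(x + y) - (k1 + k2) *\<^sub>R z = (x - k1 *\<^sub>R z) + (y - k2 *\<^sub>R z)" by (simp add: algebra_simps)
    have kk: "(x + y) - (k1 + k2) *\<^sub>R z \<in> W" unfolding e using subspace_add[OF sW k1 k2] .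
    show "h (x + y) = h x + h y" unfolding hk[OF k1] hk[OF k2] hk[OF kk] e
      using fadd[OF k1 k2] by (simp add: algebra_simps)
  next
    fix x a assume x: "x \<in> span (insert z W)"
    obtain k where k: "x - k *\<^sub>R z \<in> W" using mem[OF x] by auto
    have e: "a *\<^sub>R x - (a * k) *\<^sub>R z = a *\<^sub>R (x - k *\<^sub>R z)" by (simp add: algebra_simps)
    have kk: "a *\<^sub>R x - (a * k) *\<^sub>R z \<in> W" unfolding e using subspace_scale[OF sW k] by simp
    show "h (a *\<^sub>R x) = a * h x" unfolding hk[OF k] hk[OF kk] e
      using fsc[OF k] by (simp add: algebra_simps)
  next
    fix x assume x: "x \<in> span (insert z W)"
    obtain k where k: "x - k *\<^sub>R z \<in> W" using mem[OF x] by auto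
    define w where "w = x - k *\<^sub>R z"
    have w: "w \<in> W" using k w_def by simp
    have xw: "x = w + k *\<^sub>R z" using w_def by simp
    have "f w + k * c \<le> norm (w + k *\<^sub>R z)"
    proof (cases "k > 0")
      case True
      define y where "y = (1 / k) *\<^sub>R w"
      have y: "y \<in> W" using subspace_scale[OF sW w] y_def by simp
      have fy: "f w = k * f y" using fsc[OF w, of "1/k"] True y_def by simp
      have "w + k *\<^sub>R z = k *\<^sub>R (y + z)" using True y_def by (simp add: algebra_simps)
      hence n: "norm (w + k *\<^sub>R z) = k * norm (y + z)" using True by simp
      have "c \<le> norm (y + z) - f y" using c2 y by auto
      hence "k * c \<le> k * (norm (y + z) - f y)" using True by (simp add: mult_left_mono)
      thus ?thesis using n fy by (simp add: algebra_simps)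
    next
      case False
      show ?thesis
      proof (cases "k = 0")
        case True thus ?thesis using fle[OF w] by simp
      next
        case False2: False
        define s where "s = - k"
        have s0: "s > 0" using False False2 s_def by simp
        define y where "y = (1 / s) *\<^sub>R w"
        have y: "y \<in> W" using subspace_scale[OF sW w] y_def by simp
        have fy: "f w = s * f y" using fsc[OF w, of "1/s"] s0 y_def by simp
        have "w + k *\<^sub>R z = s *\<^sub>R (y - z)" using s0 y_def s_def by (simp add: algebra_simps)
        hence n: "norm (w + k *\<^sub>R z) = s * norm (y - z)" using s0 by simp
        have "f y - norm (y - z) \<le> c" using c1 y by auto
        hence "s * (f y - norm (y - z)) \<le> s * c" using s0 by (simp add: mult_left_mono)
        thus ?thesis using n fy s_def by (simp add: algebra_simps)
      qed
    qed
    moreover have "h x = f w + k * c" using hk[OF k] unfolding w_def by simp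
    ultimately show "h x \<le> norm x" unfolding xw by simp
  qed
  moreover have "\<forall>x\<in>W. h x = f x" using hk[of _ 0] by simp
  moreover have "h z = c" using hk[of z 1] subspace_0[OF sW] f0 by simp
  ultimately show ?thesis by blast
qed

lemma hb_c:
  fixes W :: "'b::real_normed_vector set"
  assumes pl: "pl W f"
  shows "\<exists>c. (\<forall>x\<in>W. f x - norm (x - z) \<le> c) \<and> (\<forall>y\<in>W. c \<le> norm (y + z) - f y)"
proof -
  have sW: "subspace W" and fadd: "\<And>x y. x\<in>W \<Longrightarrow> y\<in>W \<Longrightarrow> f (x + y) = f x + f y"
    and fle: "\<And>x. x\<in>W \<Longrightarrow> f x \<le> norm x"
    using pl unfolding pl_def by auto
  have key: "f x - norm (x - z) \<le> norm (y + z) - f y" if x: "x \<in> W" and y: "y \<in> W" for x y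
  proof -
    have "f x + f y \<le> norm (x + y)" using fadd[OF x y] fle[OF subspace_add[OF sW x y]] by simp
    also have "x + y = (x - z) + (y + z)" by simp
    also have "norm \<dots> \<le> norm (x - z) + norm (y + z)" by (rule norm_triangle_ineq)
    finally show ?thesis by simp
  qed
  define A where "A = (\<lambda>x. f x - norm (x - z)) ` W"
  have ne: "A \<noteq> {}" using subspace_0[OF sW] A_def by auto
  have bdd: "bdd_above A" unfolding A_def bdd_above_def
    using key[OF _ subspace_0[OF sW]] by blast
  show ?thesis
  proof (intro exI conjI ballI)
    fix x assume "x \<in> W" thus "f x - norm (x - z) \<le> Sup A"
      using cSup_upper[OF _ bdd] A_def by auto
  next
    fix y assume "y \<in> W" thus "Sup A \<le> norm (y + z) - f y"
      using cSup_least[OF ne] key A_def by auto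
  qed
qed

lemma hb_ext:
  fixes W :: "'b::real_normed_vector set"
  assumes pl: "pl W f"
  shows "\<exists>h. pl (span (insert z W)) h \<and> (\<forall>x\<in>W. h x = f x)"
proof (cases "z \<in> W")
  case True
  have "subspace W" using pl pl_def by auto
  hence "span (insert z W) = W" using True by (simp add: insert_absorb)
  thus ?thesis using pl by auto
next
  case False
  obtain c where "(\<forall>x\<in>W. f x - norm (x - z) \<le> c) \<and> (\<forall>y\<in>W. c \<le> norm (y + z) - f y)"
    using hb_c[OF pl] by blast
  thus ?thesis using hb_step[OF pl False] by blast
qed

lemma hb_ind:
  fixes W :: "'b::real_normed_vector set"
  assumes "finite S"
  shows "pl W f \<Longrightarrow> \<exists>h. pl (span (S \<union> W)) h \<and> (\<forall>x\<in>W. h x = f x)"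
  using assms
proof (induction S rule: finite_induct)
  case empty
  hence "subspace W" using pl_def by auto
  hence "span W = W" by simp
  hence "pl (span W) f" using empty.prems by (simp only:)
  thus ?case by auto
next
  case (insert z S)
  obtain h1 where h1: "pl (span (S \<union> W)) h1" "\<forall>x\<in>W. h1 x = f x" using insert by blast
  obtain h2 where h2: "pl (span (insert z (span (S \<union> W)))) h2" "\<forall>x\<in>span (S \<union> W). h2 x = h1 x"
    using hb_ext[OF h1(1)] by blast
  have e: "span (insert z (span (S \<union> W))) = span (insert z S \<union> W)"
    by (simp add: span_insert span_span)
  have "\<forall>x\<in>W. h2 x = f x" using h1(2) h2(2) span_superset[of "S \<union> W"] by auto
  thus ?case using h2(1) unfolding e by blast
qed

lemma hahn_banach_fd:
  fixes y :: "'b::real_normed_vector"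
  assumes fd: "fin_dim_space TYPE('b)" and y0: "y \<noteq> 0"
  shows "\<exists>g. bounded_linear g \<and> onorm g = 1 \<and> g y = norm y"
proof -
  obtain S :: "'b set" where S: "finite S" "span S = UNIV" using fd unfolding fin_dim_space_def by blast
  have p0: "pl {0} (\<lambda>_. 0)" unfolding pl_def by simp
  obtain h1 where h1: "pl (span (insert y {0})) h1" "h1 y = norm y"
    using hb_step[OF p0, of y "norm y"] y0 by auto
  obtain h where h: "pl (span (S \<union> span (insert y {0}))) h" "\<forall>x\<in>span (insert y {0}). h x = h1 x"
    using hb_ind[OF S(1) h1(1)] by blast
  have U: "span (S \<union> span (insert y {0})) = UNIV"
    using S(2) span_mono[of S "S \<union> span (insert y {0})"] by auto
  have hadd: "\<And>a b. h (a + b) = h a + h b" and hsc: "\<And>a r. h (r *\<^sub>R a) = r * h a"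
    and hle: "\<And>a. h a \<le> norm a" using h(1) unfolding pl_def U by auto
  have hy: "h y = norm y" using h(2) h1(2) span_superset[of "insert y {0}"] by auto
  have habs: "norm (h a) \<le> norm a" for a
  proof -
    have "- h a = h (-a)" using hsc[of "-1" a] by simp
    hence "- h a \<le> norm a" using hle[of "-a"] by simp
    thus ?thesis using hle[of a] by simp
  qed
  have bl: "bounded_linear h"
    by (rule bounded_linear_intro[where K=1]) (use hadd hsc habs in auto)
  have o1: "onorm h \<le> 1" by (rule onorm_bound) (use habs in auto)
  have "norm y \<le> onorm h * norm y" using onorm[OF bl, of y] hy by simp
  hence "1 \<le> onorm h" using y0 by simp
  thus ?thesis using o1 bl hy by (intro exI[of _ h]) auto
qed


lemma tea_scale:
  fixes a b :: "'b::real_normed_vector"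
  assumes "norm (a + b) = norm a + norm b" "0 \<le> s" "0 \<le> r"
  shows "norm (s *\<^sub>R a + r *\<^sub>R b) = s * norm a + r * norm b"
proof (rule antisym)
  show "norm (s *\<^sub>R a + r *\<^sub>R b) \<le> s * norm a + r * norm b"
    using norm_triangle_ineq[of "s *\<^sub>R a" "r *\<^sub>R b"] assms by simp
next
  show "s * norm a + r * norm b \<le> norm (s *\<^sub>R a + r *\<^sub>R b)"
  proof (cases "r \<le> s")
    case True
    have "s *\<^sub>R (a + b) = (s *\<^sub>R a + r *\<^sub>R b) + (s - r) *\<^sub>R b" by (simp add: algebra_simps)
    hence i: "norm (s *\<^sub>R (a + b)) \<le> norm (s *\<^sub>R a + r *\<^sub>R b) + norm ((s - r) *\<^sub>R b)"
      by (metis norm_triangle_ineq)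
    have n1: "norm (s *\<^sub>R (a + b)) = s * norm a + s * norm b"
      by (simp only: norm_scaleR assms(1)) (use assms(2) in \<open>simp add: algebra_simps\<close>)
    have n2: "norm ((s - r) *\<^sub>R b) = (s - r) * norm b" using True by simp
    show ?thesis using i n1 n2 by (simp add: algebra_simps)
  next
    case False
    have "r *\<^sub>R (a + b) = (s *\<^sub>R a + r *\<^sub>R b) + (r - s) *\<^sub>R a" by (simp add: algebra_simps)
    hence i: "norm (r *\<^sub>R (a + b)) \<le> norm (s *\<^sub>R a + r *\<^sub>R b) + norm ((r - s) *\<^sub>R a)"
      by (metis norm_triangle_ineq)
    have n1: "norm (r *\<^sub>R (a + b)) = r * norm a + r * norm b"
      by (simp only: norm_scaleR assms(1)) (use assms(3) in \<open>simp add: algebra_simps\<close>)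
    have n2: "norm ((r - s) *\<^sub>R a) = (r - s) * norm a" using False by simp
    show ?thesis using i n1 n2 by (simp add: algebra_simps)
  qed
qed

lemma convex_comb_pts:
  fixes F :: "'a::real_vector set"
  assumes cF: "convex F" and v0: "v0 \<in> F" and fB: "finite B" and BF: "\<forall>b\<in>B. v0 + b \<in> F"
    and a0: "\<forall>b\<in>B. 0 \<le> a b" and a1: "sum a B \<le> 1"
  shows "v0 + (\<Sum>b\<in>B. a b *\<^sub>R b) \<in> F"
proof (cases "sum a B = 0")
  case True
  hence "\<forall>b\<in>B. a b = 0" using sum_nonneg_eq_0_iff[OF fB] a0 by auto
  thus ?thesis using v0 by simp
next
  case False
  define s where "s = sum a B"
  have s0: "s > 0" using False a0 s_def sum_nonneg[of B a] by force
  have "(\<Sum>b\<in>B. (a b / s) *\<^sub>R (v0 + b)) \<in> F"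
  proof (rule convex_sum[OF fB cF])
    show "(\<Sum>i\<in>B. a i / s) = 1" using s0 s_def by (simp add: sum_divide_distrib[symmetric])
  qed (use a0 s0 BF in auto)
  moreover have "(\<Sum>b\<in>B. (a b / s) *\<^sub>R (v0 + b)) = v0 + (1 / s) *\<^sub>R (\<Sum>b\<in>B. a b *\<^sub>R b)"
  proof -
    have "(\<Sum>b\<in>B. (a b / s) *\<^sub>R (v0 + b)) = (\<Sum>b\<in>B. (a b / s) *\<^sub>R v0) + (\<Sum>b\<in>B. (a b / s) *\<^sub>R b)"
      by (simp add: scaleR_right_distrib sum.distrib)
    also have "(\<Sum>b\<in>B. (a b / s) *\<^sub>R v0) = (\<Sum>b\<in>B. a b / s) *\<^sub>R v0" by (simp add: scaleR_sum_left)
    also have "(\<Sum>b\<in>B. a b / s) = 1" using s0 s_def by (simp add: sum_divide_distrib[symmetric])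
    also have "(\<Sum>b\<in>B. (a b / s) *\<^sub>R b) = (1 / s) *\<^sub>R (\<Sum>b\<in>B. a b *\<^sub>R b)"
      by (simp add: scaleR_sum_right)
    finally show ?thesis by simp
  qed
  ultimately have p: "v0 + (1 / s) *\<^sub>R (\<Sum>b\<in>B. a b *\<^sub>R b) \<in> F" by simp
  have "(1 - s) *\<^sub>R v0 + s *\<^sub>R (v0 + (1 / s) *\<^sub>R (\<Sum>b\<in>B. a b *\<^sub>R b)) \<in> F"
    using convexD[OF cF v0 p, of "1 - s" s] s0 a1 s_def by simp
  moreover have "(1 - s) *\<^sub>R v0 + s *\<^sub>R (v0 + (1 / s) *\<^sub>R (\<Sum>b\<in>B. a b *\<^sub>R b)) = v0 + (\<Sum>b\<in>B. a b *\<^sub>R b)"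
    using s0 by (simp add: algebra_simps)
  ultimately show ?thesis by simp
qed

lemma interior_point:
  fixes F :: "'a::real_normed_vector set"
  assumes fd: "fin_dim_space TYPE('a)" and cF: "convex F" and ne: "F \<noteq> {}"
  shows "\<exists>u\<in>F. \<forall>v\<in>F. \<exists>w\<in>F. \<exists>t. 0 < t \<and> t < 1 \<and> u = t *\<^sub>R v + (1 - t) *\<^sub>R w"
proof -
  obtain S :: "'a set" where S: "finite S" "span S = UNIV" using fd unfolding fin_dim_space_def by blast
  obtain v0 where v0: "v0 \<in> F" using ne by auto
  define D where "D = (\<lambda>v. v - v0) ` F"
  obtain B where B: "B \<subseteq> D" "independent B" "D \<subseteq> span B" using maximal_independent_subset by blast
  have fB: "finite B" using independent_span_bound[OF S(1) B(2)] S(2) by auto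
  have BF: "\<forall>b\<in>B. v0 + b \<in> F" using B(1) D_def by auto
  define n where "n = real (card B) + 1"
  have n1: "n \<ge> 1" using n_def by simp
  define u where "u = v0 + (\<Sum>b\<in>B. (1 / n) *\<^sub>R b)"
  have uF: "u \<in> F" unfolding u_def
  proof (rule convex_comb_pts[OF cF v0 fB BF])
    show "\<forall>b\<in>B. 0 \<le> 1 / n" using n1 by simp
    show "(\<Sum>b\<in>B. 1 / n) \<le> 1" using n1 n_def by (simp add: field_simps)
  qed
  show ?thesis
  proof (rule bexI[OF _ uF], intro ballI)
    fix v assume vF: "v \<in> F"
    have "v - v0 \<in> span B" using B(3) vF D_def by auto
    then obtain c where c: "(\<Sum>b\<in>B. c b *\<^sub>R b) = v - v0" unfolding span_finite[OF fB] by auto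
    define M where "M = 1 + (\<Sum>b\<in>B. \<bar>c b\<bar>)"
    have M1: "M \<ge> 1" using M_def sum_nonneg[of B "\<lambda>b. \<bar>c b\<bar>"] by simp
    define e where "e = 1 / (n * M)"
    have e0: "e > 0" using n1 M1 e_def by simp
    have enM: "e * n * M = 1" using n1 M1 e_def by simp
    define a where "a b = (1 + e) / n - e * c b" for b
    have eM: "e * M = 1 / n" using enM n1 by (simp add: field_simps)
    have a0: "\<forall>b\<in>B. 0 \<le> a b"
    proof
      fix b assume b: "b \<in> B"
      have "\<bar>c b\<bar> \<le> M" using member_le_sum[OF b, of "\<lambda>b. \<bar>c b\<bar>"] fB M_def by simp
      hence "e * \<bar>c b\<bar> \<le> e * M" using e0 by (simp add: mult_left_mono)
      moreover have "e * c b \<le> e * \<bar>c b\<bar>" using e0 by (simp add: mult_left_mono)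
      moreover have "1 / n \<le> (1 + e) / n" using n1 e0 by (simp add: divide_right_mono)
      ultimately show "0 \<le> a b" using a_def eM by simp
    qed
    have a1: "sum a B \<le> 1"
    proof -
      have eq: "sum a B = real (card B) * ((1 + e) / n) - e * (\<Sum>b\<in>B. c b)"
        unfolding a_def by (simp add: sum_subtractf sum_distrib_left)
      have neg: "- (\<Sum>b\<in>B. c b) \<le> (\<Sum>b\<in>B. \<bar>c b\<bar>)"
        using sum_abs[of c B] by linarith
      have "e * (- (\<Sum>b\<in>B. c b)) \<le> e * (\<Sum>b\<in>B. \<bar>c b\<bar>)"
        using mult_left_mono[OF neg, of e] e0 by simp
      hence ne: "- e * (\<Sum>b\<in>B. c b) \<le> e * (M - 1)" using M_def by simp
      have cb: "real (card B) = n - 1" using n_def by simp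
      have "real (card B) * ((1 + e) / n) = (n - 1) / n + e * ((n - 1) / n)" unfolding cb using n1 by (simp add: field_simps)
      moreover have "e * ((n - 1) / n) \<le> e" using e0 n1 by (simp add: field_simps)
      moreover have "(n - 1) / n + 1 / n = 1" using n1 by (simp add: field_simps)
      ultimately show ?thesis using eq ne eM by (simp add: algebra_simps)
    qed
    define w where "w = v0 + (\<Sum>b\<in>B. a b *\<^sub>R b)"
    have wF: "w \<in> F" unfolding w_def by (rule convex_comb_pts[OF cF v0 fB BF a0 a1])
    have "(\<Sum>b\<in>B. a b *\<^sub>R b) = ((1 + e) / n) *\<^sub>R (\<Sum>b\<in>B. b) - e *\<^sub>R (\<Sum>b\<in>B. c b *\<^sub>R b)"
      unfolding a_def by (simp add: scaleR_diff_left sum_subtractf scaleR_sum_right)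
    moreover have "(\<Sum>b\<in>B. (1 / n) *\<^sub>R b) = (1 / n) *\<^sub>R (\<Sum>b\<in>B. b)" by (simp add: scaleR_sum_right)
    ultimately have w: "w = (1 + e) *\<^sub>R u - e *\<^sub>R v"
      unfolding w_def u_def c by (simp add: algebra_simps)
    define t where "t = e / (1 + e)"
    have t: "0 < t" "t < 1" using e0 t_def by auto
    have "t *\<^sub>R v + (1 - t) *\<^sub>R w = u"
    proof -
      have h1: "1 - t = 1 / (1 + e)" using e0 t_def by (simp add: field_simps)
      have "t *\<^sub>R v + (1 - t) *\<^sub>R w = (1 / (1 + e)) *\<^sub>R (e *\<^sub>R v + w)"
        unfolding h1 t_def scaleR_right_distrib scaleR_scaleR using h1[unfolded t_def] by simp
      also have "e *\<^sub>R v + w = (1 + e) *\<^sub>R u" using w by simp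
      finally show ?thesis using e0 by simp
    qed
    thus "\<exists>w\<in>F. \<exists>t. 0 < t \<and> t < 1 \<and> u = t *\<^sub>R v + (1 - t) *\<^sub>R w" using wF t by metis
  qed
qed


theorem mainTheorem12:
  fixes T :: "'a::real_normed_vector \<Rightarrow> 'b::real_normed_vector"
    and F :: "'a set"
  assumes "fin_dim_space TYPE('a)" and "fin_dim_space TYPE('b)"
    and "bounded_linear T"
    and "face_of_ball F"
    and "T ` F \<noteq> {0}"
  shows "(\<forall>x\<in>F. \<forall>y\<in>F. TEA_pair (T x) (T y)) \<longleftrightarrow>
         (\<exists>u\<in>F. T u \<noteq> 0 \<and> (\<forall>v\<in>F. T v \<noteq> 0 \<longrightarrow> Jmap (T u) \<subseteq> Jmap (T v)))"
proof -
  have cF: "convex F" and ne: "F \<noteq> {}" using assms(4) unfolding face_of_ball_def by auto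
  interpret T: bounded_linear T by fact
  have "\<exists>v1\<in>F. T v1 \<noteq> 0"
  proof (rule ccontr)
    assume "\<not> (\<exists>v1\<in>F. T v1 \<noteq> 0)"
    hence "T ` F = {0}" using ne by auto
    thus False using assms(5) by simp
  qed
  then obtain v1 where v1: "v1 \<in> F" "T v1 \<noteq> 0" by blast
  have gle: "g z \<le> norm z" if "g \<in> Jmap y" for g y z
  proof -
    have "bounded_linear g" "onorm g = 1" using that unfolding Jmap_def by auto
    hence "norm (g z) \<le> norm z" using onorm[of g z] by simp
    thus ?thesis by simp
  qed
  show ?thesis
  proof
    assume H: "\<forall>x\<in>F. \<forall>y\<in>F. TEA_pair (T x) (T y)"
    obtain u where uF: "u \<in> F" and uI: "\<forall>v\<in>F. \<exists>w\<in>F. \<exists>t. 0 < t \<and> t < 1 \<and> u = t *\<^sub>R v + (1 - t) *\<^sub>R w"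
      using interior_point[OF assms(1) cF ne] by blast
    have dec: "\<exists>w\<in>F. \<exists>t. 0 < t \<and> t < 1 \<and> T u = t *\<^sub>R T v + (1 - t) *\<^sub>R T w \<and>
                 norm (T u) = t * norm (T v) + (1 - t) * norm (T w)" if vF: "v \<in> F" for v
    proof -
      obtain w t where w: "w \<in> F" "0 < t" "t < 1" "u = t *\<^sub>R v + (1 - t) *\<^sub>R w" using uI vF by blast
      have Tu: "T u = t *\<^sub>R T v + (1 - t) *\<^sub>R T w" using w(4) by (simp add: T.add T.scaleR)
      have "norm (T u) = t * norm (T v) + (1 - t) * norm (T w)"
        unfolding Tu by (rule tea_scale) (use H vF w in \<open>auto simp: TEA_pair_def\<close>)
      thus ?thesis using w Tu by blast
    qed
    have Tu0: "T u \<noteq> 0"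
    proof
      assume "T u = 0"
      obtain w t where "0 < t" "t < 1" "norm (T u) = t * norm (T v1) + (1 - t) * norm (T w)"
        using dec[OF v1(1)] by blast
      moreover have "0 < t * norm (T v1)" using v1 \<open>0 < t\<close> by simp
      moreover have "0 \<le> (1 - t) * norm (T w)" using \<open>t < 1\<close> by simp
      ultimately show False using \<open>T u = 0\<close> by simp
    qed
    show "\<exists>u\<in>F. T u \<noteq> 0 \<and> (\<forall>v\<in>F. T v \<noteq> 0 \<longrightarrow> Jmap (T u) \<subseteq> Jmap (T v))"
    proof (rule bexI[OF _ uF], intro conjI ballI impI subsetI)
      show "T u \<noteq> 0" by fact
      fix v g assume vF: "v \<in> F" and g: "g \<in> Jmap (T u)"
      have gb: "bounded_linear g" "onorm g = 1" "g (T u) = norm (T u)" using g unfolding Jmap_def by auto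
      interpret g: bounded_linear g by fact
      obtain w t where wt: "0 < t" "t < 1" "T u = t *\<^sub>R T v + (1 - t) *\<^sub>R T w"
        "norm (T u) = t * norm (T v) + (1 - t) * norm (T w)" using dec[OF vF] by blast
      have "g (T u) = t * g (T v) + (1 - t) * g (T w)" unfolding wt(3) by (simp add: g.add g.scaleR)
      moreover have "g (T v) \<le> norm (T v)" "g (T w) \<le> norm (T w)" using gle[OF g] by auto
      moreover have "(1 - t) * g (T w) \<le> (1 - t) * norm (T w)"
        using mult_left_mono[OF \<open>g (T w) \<le> norm (T w)\<close>, of "1 - t"] wt(2) by simp
      ultimately have "t * norm (T v) \<le> t * g (T v)" using gb(3) wt(4) by simp
      hence "norm (T v) \<le> g (T v)" using wt(1) by simp
      hence "g (T v) = norm (T v)" using \<open>g (T v) \<le> norm (T v)\<close> by simp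
      thus "g \<in> Jmap (T v)" using gb unfolding Jmap_def by simp
    qed
  next
    assume "\<exists>u\<in>F. T u \<noteq> 0 \<and> (\<forall>v\<in>F. T v \<noteq> 0 \<longrightarrow> Jmap (T u) \<subseteq> Jmap (T v))"
    then obtain u where uF: "u \<in> F" and Tu: "T u \<noteq> 0" and J: "\<forall>v\<in>F. T v \<noteq> 0 \<longrightarrow> Jmap (T u) \<subseteq> Jmap (T v)"
      by blast
    obtain g where g: "bounded_linear g" "onorm g = 1" "g (T u) = norm (T u)"
      using hahn_banach_fd[OF assms(2) Tu] by blast
    have gJ: "g \<in> Jmap (T u)" using g unfolding Jmap_def by simp
    show "\<forall>x\<in>F. \<forall>y\<in>F. TEA_pair (T x) (T y)"
    proof (intro ballI)
      fix x y assume x: "x \<in> F" and y: "y \<in> F"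
      show "TEA_pair (T x) (T y)"
      proof (cases "T x = 0 \<or> T y = 0")
        case True thus ?thesis unfolding TEA_pair_def by auto
      next
        case False
        hence "g \<in> Jmap (T x)" "g \<in> Jmap (T y)" using J x y gJ by auto
        hence gx: "g (T x) = norm (T x)" and gy: "g (T y) = norm (T y)" unfolding Jmap_def by auto
        interpret g: bounded_linear g by (rule g(1))
        have "g (T x + T y) \<le> norm (T x + T y)" using gle[OF gJ] by blast
        hence "norm (T x) + norm (T y) \<le> norm (T x + T y)" using gx gy g.add by simp
        thus ?thesis unfolding TEA_pair_def using norm_triangle_ineq[of "T x" "T y"] by simp
      qed
    qed
  qed
qed

end
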